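(* Consider the mixture model $h_Q(x)=\int_0^{\theta_\ast}f(x;\theta)\,\mathrm dQ(\theta)$, $x\in\mathbb Z^{\ge0}$, where $f(\cdot;\theta)$ is a known probability mass function on $\mathbb Z^{\ge0}$ of the discrete exponential family form $f(x;\theta)=g(\theta)w(x)\theta^x$ for $x\in\mathbb Z^{\ge0}$, $\theta\in[0,\theta_\ast]$, with $g$ analytic in a neighborhood of $0$ and $0\le\theta_\ast<\theta_c$, where $\theta_c$ is the radius of convergence of $\sum_{x\ge0}w(x)\theta^x$; assume moreover that $f(x;\theta)$ is continuous in $\theta$. Let $X_1,\dots,X_n$ be observations and let $d$ be a generalized distance satisfying Assumption A. Then a minimum-distance estimator $\hat Q_d\in\operatorname*{argmin}_{\tilde Q\in\mathcal P([0,\theta_\ast])}d(h^{\rm obs}\Vert h_{\tilde Q})$ exists, and both the Vertex Direction Method (VDM) and the Intra Simplex Direction Method (ISDM) produce a sequence of iterates $G$ along which $\Phi(G)\to\Phi(\hat Q_d)$ as the number of iterations increases.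
   Context: $\mathcal P(A)$ denotes the set of probability measures on $A$. A generalized distance is a map $d:\mathcal P(\mathbb Z^{\ge0})\times\mathcal P(\mathbb Z^{\ge0})\to\mathbb R^{\ge0}$, written $d(p\Vert q)$, with $d(p\Vert q)=0$ iff $p=q$. Assumption A: there exist maps $w_d:\mathcal P(\mathbb Z^{\ge0})\to\mathbb R$ and $\phi:\mathbb R^{\ge0}\times\mathbb R^{\ge0}\to\mathbb R$ such that $d(p\Vert q)=w_d(p)+\sum_{x\ge0}\phi(p(x),q(x))$; $\phi$ is continuously differentiable, $\phi(0,y_2)=0$ for all $y_2\ge0$, and $y_2\mapsto\phi(y_1,y_2)$ is strictly convex for each fixed $y_1>0$. The empirical distribution is $h^{\rm obs}(x)=\frac1n\sum_{i=1}^n\mathbf 1(X_i=x)$. Let $\{i_1,\dots,i_q\}$ be the set of distinct observed values and $\alpha_x=\frac1n\sum_{s=1}^n\mathbf 1(X_s=i_x)$. For $G\in\mathcal P([0,\theta_\ast])$ let $\mu_x(G)=\int_0^{\theta_\ast}f(i_x;\theta)\,\mathrm dG(\theta)$ and $\Phi(G)=\sum_{x=1}^q\phi(\alpha_x,\mu_x(G))$. For probability measures $G\ne\delta_0$ and $P$, the directional derivative is $\Phi'(G,P)=\lim_{\epsilon\to0^+}\frac{\Phi((1-\epsilon)G+\epsilon P)-\Phi(G)}{\epsilon}$; $\delta_\lambda$ is the point mass at $\lambda$. VDM: given $\lambda_0\in(0,\theta_\ast)$, start with $G=\delta_{\lambda_0}$; while $\min_{\lambda\in[0,\theta_\ast]}\Phi'(G,\delta_\lambda)<0$: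 choose $\lambda\in\operatorname{argmin}_{\lambda\in[0,\theta_\ast]}\Phi'(G,\delta_\lambda)$, choose $\epsilon\in\operatorname{argmin}_{\epsilon\in[0,1]}\Phi((1-\epsilon)G+\epsilon\delta_\lambda)$, and update $G\leftarrow(1-\epsilon)G+\epsilon\delta_\lambda$; return $G$. ISDM: given $\lambda_0\in(0,\theta_\ast)$, start with $G=\delta_{\lambda_0}$; while $\min_{\lambda\in[0,\theta_\ast]}\Phi'(G,\delta_\lambda)<0$: choose local minima $\lambda_1,\dots,\lambda_s$ of $\lambda\mapsto\Phi'(G,\delta_\lambda)$, choose $(\epsilon_0,\dots,\epsilon_s)\in\operatorname{argmin}\{\Phi(\epsilon_0G+\sum_{x=1}^s\epsilon_x\delta_{\lambda_x}):\epsilon_x\ge0,\sum_x\epsilon_x=1\}$, and update $G\leftarrow\epsilon_0G+\sum_{x=1}^s\epsilon_x\delta_{\lambda_x}$; return $G$. *)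

theory Defs
  imports "HOL-Analysis.Analysis" "HOL-Probability.Probability"
begin

definition strict_convex_on_set :: "real set \<Rightarrow> (real \<Rightarrow> real) \<Rightarrow> bool" where
  "strict_convex_on_set S F \<longleftrightarrow>
     (\<forall>x\<in>S. \<forall>y\<in>S. \<forall>t. x \<noteq> y \<and> 0 < t \<and> t < 1 \<longrightarrow>
        F ((1 - t) * x + t * y) < (1 - t) * F x + t * F y)"

definition analytic_near_zero :: "(real \<Rightarrow> real) \<Rightarrow> bool" where
  "analytic_near_zero g \<longleftrightarrow>
     (\<exists>r>0. \<exists>c :: nat \<Rightarrow> real. \<forall>t. \<bar>t\<bar> < r \<longrightarrow> (\<lambda>k. c k * t ^ k) sums g t)"

definition C1_on_quadrant :: "(real \<Rightarrow> real \<Rightarrow> real) \<Rightarrow> bool" where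
  "C1_on_quadrant \<phi> \<longleftrightarrow>
     (\<exists>D1 D2 :: real \<times> real \<Rightarrow> real.
        continuous_on {z. 0 \<le> fst z \<and> 0 \<le> snd z} D1 \<and>
        continuous_on {z. 0 \<le> fst z \<and> 0 \<le> snd z} D2 \<and>
        (\<forall>z\<in>{z. 0 \<le> fst z \<and> 0 \<le> snd z}.
           ((\<lambda>u. \<phi> (fst u) (snd u)) has_derivative (\<lambda>h. D1 z * fst h + D2 z * snd h))
             (at z within {z. 0 \<le> fst z \<and> 0 \<le> snd z})))"

definition generalized_distance :: "(nat pmf \<Rightarrow> nat pmf \<Rightarrow> real) \<Rightarrow> bool" where
  "generalized_distance d \<longleftrightarrow> (\<forall>p q. 0 \<le> d p q \<and> (d p q = 0 \<longleftrightarrow> p = q))"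

definition assumptionA :: "(nat pmf \<Rightarrow> nat pmf \<Rightarrow> real) \<Rightarrow> (real \<Rightarrow> real \<Rightarrow> real) \<Rightarrow> bool" where
  "assumptionA d \<phi> \<longleftrightarrow>
     (\<exists>wd :: nat pmf \<Rightarrow> real. \<forall>p q. d p q = wd p + (\<Sum>x. \<phi> (pmf p x) (pmf q x))) \<and>
     C1_on_quadrant \<phi> \<and>
     (\<forall>y2\<ge>0. \<phi> 0 y2 = 0) \<and>
     (\<forall>y1>0. strict_convex_on_set {0..} (\<phi> y1))"

definition probs_on :: "real \<Rightarrow> real measure set" where
  "probs_on ths = {Q. prob_space Q \<and> sets Q = sets borel \<and> emeasure Q {0..ths} = 1}"

definition mixture_pmf :: "(nat \<Rightarrow> real \<Rightarrow> real) \<Rightarrow> real \<Rightarrow> real measure \<Rightarrow> nat pmf" where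
  "mixture_pmf f ths Q = embed_pmf (\<lambda>x. LINT \<theta>:{0..ths}|Q. f x \<theta>)"

text \<open>Empirical distribution of \<open>X_1,\<dots>,X_n\<close> (here indexed \<open>X 0, \<dots>, X (n-1)\<close>).\<close>
definition empirical :: "nat \<Rightarrow> (nat \<Rightarrow> nat) \<Rightarrow> nat pmf" where
  "empirical n X = map_pmf X (pmf_of_set {..<n})"

definition Phi :: "(real \<Rightarrow> real \<Rightarrow> real) \<Rightarrow> (nat \<Rightarrow> real \<Rightarrow> real) \<Rightarrow> real \<Rightarrow> nat \<Rightarrow> (nat \<Rightarrow> nat)
                   \<Rightarrow> real measure \<Rightarrow> real" where
  "Phi \<phi> f ths n X G =
     (\<Sum>v\<in>X ` {..<n}. \<phi> (pmf (empirical n X) v) (LINT \<theta>:{0..ths}|G. f v \<theta>))"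

definition simplex_comb :: "real pmf \<Rightarrow> real \<Rightarrow> real set \<Rightarrow> (real \<Rightarrow> real) \<Rightarrow> real pmf" where
  "simplex_comb G e0 L e =
     embed_pmf (\<lambda>t. e0 * pmf G t + (\<Sum>l\<in>L. e l * indicator {l} t))"

definition simplex_weights :: "real set \<Rightarrow> real \<Rightarrow> (real \<Rightarrow> real) \<Rightarrow> bool" where
  "simplex_weights L e0 e \<longleftrightarrow> 0 \<le> e0 \<and> (\<forall>l\<in>L. 0 \<le> e l) \<and> e0 + (\<Sum>l\<in>L. e l) = 1"

definition vmix :: "real \<Rightarrow> real \<Rightarrow> real pmf \<Rightarrow> real pmf" where
  "vmix \<epsilon> l G = simplex_comb G (1 - \<epsilon>) {l} (\<lambda>_. \<epsilon>)"

definition Phi_dir :: "(real \<Rightarrow> real \<Rightarrow> real) \<Rightarrow> (nat \<Rightarrow> real \<Rightarrow> real) \<Rightarrow> real \<Rightarrow> nat \<Rightarrow> (nat \<Rightarrow> nat)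
                   \<Rightarrow> real pmf \<Rightarrow> real \<Rightarrow> real" where
  "Phi_dir \<phi> f ths n X G l =
     Lim (at_right 0) (\<lambda>\<epsilon>. (Phi \<phi> f ths n X (measure_pmf (vmix \<epsilon> l G))
                            - Phi \<phi> f ths n X (measure_pmf G)) / \<epsilon>)"

text \<open>One pass of the VDM while-loop; once the loop condition fails, the iterate is kept.\<close>
definition vdm_step :: "(real \<Rightarrow> real \<Rightarrow> real) \<Rightarrow> (nat \<Rightarrow> real \<Rightarrow> real) \<Rightarrow> real \<Rightarrow> nat \<Rightarrow> (nat \<Rightarrow> nat)
                   \<Rightarrow> real pmf \<Rightarrow> real pmf \<Rightarrow> bool" where
  "vdm_step \<phi> f ths n X G G' \<longleftrightarrow>
     (if \<exists>l\<in>{0..ths}. Phi_dir \<phi> f ths n X G l < 0 then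
        (\<exists>l\<in>{0..ths}. (\<forall>l'\<in>{0..ths}. Phi_dir \<phi> f ths n X G l \<le> Phi_dir \<phi> f ths n X G l') \<and>
           (\<exists>\<epsilon>\<in>{0..1}. (\<forall>\<epsilon>'\<in>{0..1}. Phi \<phi> f ths n X (measure_pmf (vmix \<epsilon> l G))
                                      \<le> Phi \<phi> f ths n X (measure_pmf (vmix \<epsilon>' l G))) \<and>
                        G' = vmix \<epsilon> l G))
      else G' = G)"

definition local_min_on :: "real set \<Rightarrow> (real \<Rightarrow> real) \<Rightarrow> real \<Rightarrow> bool" where
  "local_min_on S F l \<longleftrightarrow> l \<in> S \<and> (\<exists>r>0. \<forall>l'\<in>S. \<bar>l' - l\<bar> < r \<longrightarrow> F l \<le> F l')"

text \<open>One pass of the ISDM while-loop; once the loop condition fails, the iterate is kept.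
  The chosen finite set of local minima must contain a global minimiser.\<close>
definition isdm_step :: "(real \<Rightarrow> real \<Rightarrow> real) \<Rightarrow> (nat \<Rightarrow> real \<Rightarrow> real) \<Rightarrow> real \<Rightarrow> nat \<Rightarrow> (nat \<Rightarrow> nat)
                   \<Rightarrow> real pmf \<Rightarrow> real pmf \<Rightarrow> bool" where
  "isdm_step \<phi> f ths n X G G' \<longleftrightarrow>
     (if \<exists>l\<in>{0..ths}. Phi_dir \<phi> f ths n X G l < 0 then
        (\<exists>L. finite L \<and> L \<noteq> {} \<and>
           (\<forall>l\<in>L. local_min_on {0..ths} (Phi_dir \<phi> f ths n X G) l) \<and>
           (\<exists>l\<in>L. \<forall>l'\<in>{0..ths}. Phi_dir \<phi> f ths n X G l \<le> Phi_dir \<phi> f ths n X G l') \<and>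
           (\<exists>e0 e. simplex_weights L e0 e \<and>
              (\<forall>e0' e'. simplex_weights L e0' e' \<longrightarrow>
                 Phi \<phi> f ths n X (measure_pmf (simplex_comb G e0 L e))
                   \<le> Phi \<phi> f ths n X (measure_pmf (simplex_comb G e0' L e'))) \<and>
              G' = simplex_comb G e0 L e))
      else G' = G)"

end

theory Submission
  imports Defs
begin


abbreviation "Quad \<equiv> {z::real\<times>real. 0 \<le> fst z \<and> 0 \<le> snd z}"

lemma dq_tendsto:
  assumes D: "\<forall>z\<in>Quad. ((\<lambda>u. \<phi> (fst u) (snd u)) has_derivative (\<lambda>h. D1 z * fst h + D2 z * snd h)) (at z within Quad)"
  and a: "0 \<le> a" and x: "0 \<le> x" and s: "0 \<le> s"
  shows "((\<lambda>e. (\<phi> a (x + e*(s-x)) - \<phi> a x)/e) \<longlongrightarrow> D2 (a,x) * (s-x)) (at_right 0)"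
proof -
  have g: "((\<lambda>e. (a, x + e*(s-x))) has_derivative (\<lambda>h. (0, h*(s-x)))) (at 0 within {0..1})"
    by (auto intro!: derivative_eq_intros)
  have img: "(\<lambda>e. (a, x + e*(s-x))) ` {0..1} \<subseteq> Quad"
  proof
    fix z assume "z \<in> (\<lambda>e. (a, x + e*(s-x))) ` {0..1}"
    then obtain e where e: "e \<in> {0..1}" "z = (a, x + e*(s-x))" by auto
    have "x + e*(s-x) = (1-e)*x + e * s" by (simp add: algebra_simps)
    also have "\<dots> \<ge> 0" using e x s by auto
    finally show "z \<in> Quad" using e a by auto
  qed
  have "((\<lambda>e. (\<lambda>u. \<phi> (fst u) (snd u)) ((\<lambda>e. (a, x + e*(s-x))) e)) has_derivative
      (\<lambda>y. (\<lambda>z h. D1 z * fst h + D2 z * snd h) ((\<lambda>e. (a, x + e*(s-x))) 0) ((\<lambda>h. (0, h*(s-x))) y))) (at 0 within {0..1})"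
    by (rule has_derivative_in_compose2[OF _ img _ g]) (use D in auto)
  then have H: "((\<lambda>e. \<phi> a (x + e*(s-x))) has_derivative (\<lambda>y. y * (D2 (a, x) * (s - x)))) (at 0 within {0..1})"
    by (simp add: algebra_simps)
  have "(\<lambda>y. y * (D2 (a, x) * (s - x))) = (*) (D2 (a,x) * (s-x))" by (auto simp: fun_eq_iff)
  with H have "((\<lambda>e. \<phi> a (x + e*(s-x))) has_field_derivative (D2 (a,x) * (s-x))) (at 0 within {0..1})"
    unfolding has_field_derivative_def by metis
  then have "((\<lambda>e. (\<phi> a (x + e*(s-x)) - \<phi> a (x + 0*(s-x)))/(e - 0)) \<longlongrightarrow> D2 (a,x) * (s-x)) (at 0 within {0..1})"
    by (simp only: has_field_derivative_iff)
  then show ?thesis by (simp add: at_within_Icc_at_right)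
qed

lemma conv_ineq:
  assumes c: "strict_convex_on_set {0..} p" and x: "0 \<le> x" and y: "0 \<le> y" and t: "0 \<le> t" "t \<le> 1"
  shows "p ((1-t)*x + t*y) \<le> (1-t) * p x + t * p y"
proof -
  consider "t = 0" | "t = 1" | "x = y" | "x \<noteq> y \<and> 0 < t \<and> t < 1" using t by force
  then show ?thesis
  proof cases
    case 3 then show ?thesis by (simp add: algebra_simps)
  next
    case 4
    then have "p ((1-t)*x + t*y) < (1-t) * p x + t * p y"
      using c x y unfolding strict_convex_on_set_def by blast
    then show ?thesis by simp
  qed auto
qed

lemma tangent_ineq:
  assumes D: "\<forall>z\<in>Quad. ((\<lambda>u. \<phi> (fst u) (snd u)) has_derivative (\<lambda>h. D1 z * fst h + D2 z * snd h)) (at z within Quad)"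
  and c: "strict_convex_on_set {0..} (\<phi> a)"
  and a: "0 \<le> a" and x: "0 \<le> x" and s: "0 \<le> s"
  shows "D2 (a,x) * (s-x) \<le> \<phi> a s - \<phi> a x"
proof (rule tendsto_upperbound[OF dq_tendsto[OF D a x s]])
  show "at_right (0::real) \<noteq> bot" by simp
  show "\<forall>\<^sub>F e in at_right 0. (\<phi> a (x + e * (s - x)) - \<phi> a x) / e \<le> \<phi> a s - \<phi> a x"
  proof (rule eventually_at_rightI[of 0 1])
    fix e :: real assume e: "e \<in> {0<..<1}"
    have "x + e * (s - x) = (1-e)*x + e * s" by (simp add: algebra_simps)
    then have "\<phi> a (x + e * (s - x)) \<le> (1-e) * \<phi> a x + e * \<phi> a s"
      using conv_ineq[OF c x s, of e] e by simp
    then have "\<phi> a (x + e * (s - x)) - \<phi> a x \<le> e * (\<phi> a s - \<phi> a x)" by (simp add: algebra_simps)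
    then show "(\<phi> a (x + e * (s - x)) - \<phi> a x) / e \<le> \<phi> a s - \<phi> a x"
      using e by (simp add: divide_le_eq mult.commute)
  qed simp
qed

lemma cont_phi:
  assumes D: "\<forall>z\<in>Quad. ((\<lambda>u. \<phi> (fst u) (snd u)) has_derivative (\<lambda>h. D1 z * fst h + D2 z * snd h)) (at z within Quad)"
  and a: "0 \<le> a"
  shows "continuous_on {0..} (\<phi> a)"
proof -
  have "continuous (at t within {0..}) (\<phi> a)" if t: "t \<in> {0..}" for t
  proof -
    have g: "((\<lambda>t. (a, t)) has_derivative (\<lambda>h. (0, h))) (at t within {0..})"
      by (auto intro!: derivative_eq_intros)
    have img: "(\<lambda>t. (a, t)) ` {0..} \<subseteq> Quad" using a by auto
    have "((\<lambda>t. (\<lambda>u. \<phi> (fst u) (snd u)) ((\<lambda>t. (a, t)) t)) has_derivative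
      (\<lambda>y. (\<lambda>z h. D1 z * fst h + D2 z * snd h) ((\<lambda>t. (a, t)) t) ((\<lambda>h. (0, h)) y))) (at t within {0..})"
      by (rule has_derivative_in_compose2[OF _ img t g]) (use D in auto)
    then have "((\<phi> a) has_derivative (\<lambda>y. D2 (a,t) * y)) (at t within {0..})" by simp
    then show ?thesis by (rule has_derivative_continuous)
  qed
  then show ?thesis by (simp add: continuous_on_eq_continuous_within)
qed

lemma unif_bound:
  assumes D: "\<forall>z\<in>Quad. ((\<lambda>u. \<phi> (fst u) (snd u)) has_derivative (\<lambda>h. D1 z * fst h + D2 z * snd h)) (at z within Quad)"
  and D2c: "continuous_on Quad D2"
  and c: "strict_convex_on_set {0..} (\<phi> a)"
  and a: "0 \<le> a" and eta: "0 < \<eta>"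
  shows "\<exists>\<delta>>0. \<forall>x\<in>{0..1}. \<forall>y\<in>{0..1}. \<bar>y - x\<bar> < \<delta> \<longrightarrow>
            \<phi> a y - \<phi> a x - D2 (a,x) * (y - x) \<le> \<eta> * \<bar>y - x\<bar>"
proof -
  have "continuous_on {0..1} (\<lambda>t. D2 (a, t))"
    by (rule continuous_on_compose2[OF D2c]) (use a in \<open>auto intro!: continuous_intros\<close>)
  then have "uniformly_continuous_on {0..1} (\<lambda>t. D2 (a, t))"
    by (rule compact_uniformly_continuous) simp
  then obtain \<delta> where d: "\<delta> > 0" and dd: "\<forall>x\<in>{0..1}. \<forall>x'\<in>{0..1}. dist x' x < \<delta> \<longrightarrow> dist (D2 (a, x')) (D2 (a, x)) < \<eta>"
    using eta unfolding uniformly_continuous_on_def by metis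
  show ?thesis
  proof (intro exI[of _ \<delta>] conjI ballI impI d)
    fix x y :: real assume x: "x \<in> {0..1}" and y: "y \<in> {0..1}" and xy: "\<bar>y - x\<bar> < \<delta>"
    have t: "D2 (a,y) * (x - y) \<le> \<phi> a x - \<phi> a y"
      using tangent_ineq[OF D c a, of y x] x y by auto
    have "\<bar>D2 (a, y) - D2 (a, x)\<bar> < \<eta>" using dd x y xy by (auto simp: dist_real_def)
    then have "\<bar>D2 (a, y) - D2 (a, x)\<bar> * \<bar>y - x\<bar> \<le> \<eta> * \<bar>y - x\<bar>"
      by (intro mult_right_mono) auto
    moreover have "(D2 (a, y) - D2 (a, x)) * (y - x) \<le> \<bar>D2 (a, y) - D2 (a, x)\<bar> * \<bar>y - x\<bar>"
      by (metis abs_ge_self abs_mult)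
    ultimately have "(D2 (a, y) - D2 (a, x)) * (y - x) \<le> \<eta> * \<bar>y - x\<bar>" by linarith
    then show "\<phi> a y - \<phi> a x - D2 (a,x) * (y - x) \<le> \<eta> * \<bar>y - x\<bar>"
      using t by (simp add: algebra_simps)
  qed
qed


definition Psi :: "(real \<Rightarrow> real \<Rightarrow> real) \<Rightarrow> nat set \<Rightarrow> (nat \<Rightarrow> real) \<Rightarrow> (nat \<Rightarrow> real) \<Rightarrow> real" where
  "Psi \<phi> V a y = (\<Sum>v\<in>V. \<phi> (a v) (y v))"

definition Dirv :: "(real \<times> real \<Rightarrow> real) \<Rightarrow> nat set \<Rightarrow> (nat \<Rightarrow> real) \<Rightarrow> (nat \<Rightarrow> real) \<Rightarrow> (nat \<Rightarrow> real) \<Rightarrow> real" where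
  "Dirv D2 V a x s = (\<Sum>v\<in>V. D2 (a v, x v) * (s v - x v))"

lemma Psi_dq_tendsto:
  assumes D: "\<forall>z\<in>Quad. ((\<lambda>u. \<phi> (fst u) (snd u)) has_derivative (\<lambda>h. D1 z * fst h + D2 z * snd h)) (at z within Quad)"
  and nn: "\<And>v. v \<in> V \<Longrightarrow> 0 \<le> a v \<and> 0 \<le> x v \<and> 0 \<le> s v"
  shows "((\<lambda>e. (Psi \<phi> V a (\<lambda>v. (1-e) * x v + e * s v) - Psi \<phi> V a x) / e) \<longlongrightarrow> Dirv D2 V a x s) (at_right 0)"
proof -
  have eq: "(\<lambda>e. (Psi \<phi> V a (\<lambda>v. (1-e) * x v + e * s v) - Psi \<phi> V a x) / e) =
        (\<lambda>e. \<Sum>v\<in>V. (\<phi> (a v) (x v + e * (s v - x v)) - \<phi> (a v) (x v)) / e)"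
  proof
    fix e :: real
    have "\<And>v. (1-e) * x v + e * s v = x v + e * (s v - x v)" by (simp add: algebra_simps)
    then show "(Psi \<phi> V a (\<lambda>v. (1-e) * x v + e * s v) - Psi \<phi> V a x) / e =
        (\<Sum>v\<in>V. (\<phi> (a v) (x v + e * (s v - x v)) - \<phi> (a v) (x v)) / e)"
      unfolding Psi_def by (simp add: sum_subtractf[symmetric] sum_divide_distrib[symmetric])
  qed
  show ?thesis unfolding eq Dirv_def
    by (rule tendsto_sum) (use nn in \<open>auto intro!: dq_tendsto[OF D]\<close>)
qed

lemma Psi_tangent:
  assumes D: "\<forall>z\<in>Quad. ((\<lambda>u. \<phi> (fst u) (snd u)) has_derivative (\<lambda>h. D1 z * fst h + D2 z * snd h)) (at z within Quad)"
  and cv: "\<forall>y1>0. strict_convex_on_set {0..} (\<phi> y1)"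
  and nn: "\<And>v. v \<in> V \<Longrightarrow> 0 < a v \<and> 0 \<le> x v \<and> 0 \<le> s v"
  shows "Dirv D2 V a x s \<le> Psi \<phi> V a s - Psi \<phi> V a x"
proof -
  have "Dirv D2 V a x s \<le> (\<Sum>v\<in>V. \<phi> (a v) (s v) - \<phi> (a v) (x v))"
    unfolding Dirv_def
  proof (rule sum_mono)
    fix v assume v: "v \<in> V"
    show "D2 (a v, x v) * (s v - x v) \<le> \<phi> (a v) (s v) - \<phi> (a v) (x v)"
      using nn[OF v] cv by (intro tangent_ineq[OF D]) auto
  qed
  then show ?thesis unfolding Psi_def by (simp add: sum_subtractf)
qed

lemma Psi_unif:
  assumes D: "\<forall>z\<in>Quad. ((\<lambda>u. \<phi> (fst u) (snd u)) has_derivative (\<lambda>h. D1 z * fst h + D2 z * snd h)) (at z within Quad)"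
  and D2c: "continuous_on Quad D2"
  and cv: "\<forall>y1>0. strict_convex_on_set {0..} (\<phi> y1)"
  and V: "finite V" "V \<noteq> {}"
  and apos: "\<And>v. v \<in> V \<Longrightarrow> 0 < a v"
  and eta: "0 < \<eta>"
  shows "\<exists>\<delta>>0. \<forall>x s e. (\<forall>v\<in>V. x v \<in> {0..1} \<and> s v \<in> {0..1}) \<longrightarrow> 0 \<le> e \<longrightarrow> e < \<delta> \<longrightarrow> e \<le> 1 \<longrightarrow>
       Psi \<phi> V a (\<lambda>v. (1-e) * x v + e * s v) \<le> Psi \<phi> V a x + e * Dirv D2 V a x s + e * \<eta>"
proof -
  define \<eta>' where "\<eta>' = \<eta> / real (card V)"
  have cpos: "0 < real (card V)" using V by (simp add: card_gt_0_iff)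
  have eta': "0 < \<eta>'" unfolding \<eta>'_def using eta cpos by simp
  have "\<forall>v\<in>V. \<exists>\<delta>>0. \<forall>x\<in>{0..1}. \<forall>y\<in>{0..1}. \<bar>y - x\<bar> < \<delta> \<longrightarrow>
            \<phi> (a v) y - \<phi> (a v) x - D2 (a v,x) * (y - x) \<le> \<eta>' * \<bar>y - x\<bar>"
    using apos cv by (intro ballI unif_bound[OF D D2c _ _ eta']) (auto simp: less_imp_le)
  then obtain df where df: "\<And>v. v \<in> V \<Longrightarrow> df v > 0 \<and> (\<forall>x\<in>{0..1}. \<forall>y\<in>{0..1}. \<bar>y - x\<bar> < df v \<longrightarrow>
            \<phi> (a v) y - \<phi> (a v) x - D2 (a v,x) * (y - x) \<le> \<eta>' * \<bar>y - x\<bar>)"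
    by metis
  define \<delta> where "\<delta> = Min (df ` V)"
  have dpos: "\<delta> > 0" unfolding \<delta>_def using V df by auto
  have dle: "\<And>v. v \<in> V \<Longrightarrow> \<delta> \<le> df v" unfolding \<delta>_def using V by auto
  show ?thesis
  proof (intro exI[of _ \<delta>] conjI allI impI dpos)
    fix x s :: "nat \<Rightarrow> real" and e :: real
    assume xs: "\<forall>v\<in>V. x v \<in> {0..1} \<and> s v \<in> {0..1}" and e: "0 \<le> e" "e < \<delta>" "e \<le> 1"
    have each: "\<phi> (a v) ((1-e) * x v + e * s v) - \<phi> (a v) (x v) - e * (D2 (a v, x v) * (s v - x v)) \<le> \<eta>' * e"
      if v: "v \<in> V" for v
    proof -
      have x1: "x v \<in> {0..1}" and s1: "s v \<in> {0..1}" using xs v by auto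
      have y1: "(1-e) * x v + e * s v \<in> {0..1}"
      proof -
        have "0 \<le> (1-e) * x v + e * s v" using x1 s1 e by auto
        moreover have "(1-e) * x v + e * s v \<le> (1-e) * 1 + e * 1"
          using x1 s1 e by (intro add_mono mult_left_mono) auto
        ultimately show ?thesis by auto
      qed
      have dif: "(1-e) * x v + e * s v - x v = e * (s v - x v)" by (simp add: algebra_simps)
      have "\<bar>s v - x v\<bar> \<le> 1" using x1 s1 by auto
      then have ab: "\<bar>(1-e) * x v + e * s v - x v\<bar> \<le> e" unfolding dif using e
        by (simp add: abs_mult mult_left_le)
      then have "\<bar>(1-e) * x v + e * s v - x v\<bar> < df v" using e dle[OF v] by linarith
      then have "\<phi> (a v) ((1-e) * x v + e * s v) - \<phi> (a v) (x v) - D2 (a v, x v) * ((1-e) * x v + e * s v - x v)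
          \<le> \<eta>' * \<bar>(1-e) * x v + e * s v - x v\<bar>"
        using df[OF v] x1 y1 by blast
      also have "\<dots> \<le> \<eta>' * e" using ab eta' by (intro mult_left_mono) auto
      finally show ?thesis unfolding dif by (simp add: algebra_simps)
    qed
    have "(\<Sum>v\<in>V. \<phi> (a v) ((1-e) * x v + e * s v) - \<phi> (a v) (x v) - e * (D2 (a v, x v) * (s v - x v)))
        \<le> (\<Sum>v\<in>V. \<eta>' * e)" by (rule sum_mono) (rule each)
    also have "\<dots> = e * \<eta>" unfolding \<eta>'_def using cpos by simp
    finally show "Psi \<phi> V a (\<lambda>v. (1-e) * x v + e * s v) \<le> Psi \<phi> V a x + e * Dirv D2 V a x s + e * \<eta>"
      unfolding Psi_def Dirv_def by (simp add: sum_subtractf sum_distrib_left)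
  qed
qed


lemma fw_conv:
  assumes D: "\<forall>z\<in>Quad. ((\<lambda>u. \<phi> (fst u) (snd u)) has_derivative (\<lambda>h. D1 z * fst h + D2 z * snd h)) (at z within Quad)"
  and D2c: "continuous_on Quad D2"
  and cv: "\<forall>y1>0. strict_convex_on_set {0..} (\<phi> y1)"
  and V: "finite V" "V \<noteq> {}"
  and apos: "\<And>v. v \<in> V \<Longrightarrow> 0 < a v"
  and xk: "\<And>k v. v \<in> V \<Longrightarrow> x k v \<in> {0..1}"
  and F: "\<And>t v. t \<in> {0..ths} \<Longrightarrow> v \<in> V \<Longrightarrow> F t v \<in> {0..1}"
  and low: "\<And>k. Pstar \<le> Psi \<phi> V a (x k)"
  and sdir: "\<And>k m. (\<forall>t\<in>{0..ths}. m \<le> Dirv D2 V a (x k) (F t)) \<Longrightarrow> m \<le> Pstar - Psi \<phi> V a (x k)"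
  and step: "\<And>k. ((\<forall>l\<in>{0..ths}. 0 \<le> Dirv D2 V a (x k) (F l)) \<and> x (Suc k) = x k) \<or>
      (\<exists>l\<in>{0..ths}. (\<forall>l'\<in>{0..ths}. Dirv D2 V a (x k) (F l) \<le> Dirv D2 V a (x k) (F l')) \<and>
          (\<forall>e\<in>{0..1}. Psi \<phi> V a (x (Suc k)) \<le> Psi \<phi> V a (\<lambda>v. (1-e) * x k v + e * F l v)))"
  shows "(\<lambda>k. Psi \<phi> V a (x k)) \<longlonglongrightarrow> Pstar"
proof -
  define h where "h k = Psi \<phi> V a (x k) - Pstar" for k
  have h0: "0 \<le> h k" for k using low[of k] unfolding h_def by simp
  have caseA: "h k = 0" if "\<forall>l\<in>{0..ths}. 0 \<le> Dirv D2 V a (x k) (F l)" for k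
    using sdir[of 0 k] that h0[of k] unfolding h_def by simp
  have mono: "h (Suc k) \<le> h k" for k
    using step[of k]
  proof
    assume "(\<forall>l\<in>{0..ths}. 0 \<le> Dirv D2 V a (x k) (F l)) \<and> x (Suc k) = x k"
    then show ?thesis unfolding h_def by simp
  next
    assume "\<exists>l\<in>{0..ths}. (\<forall>l'\<in>{0..ths}. Dirv D2 V a (x k) (F l) \<le> Dirv D2 V a (x k) (F l')) \<and>
          (\<forall>e\<in>{0..1}. Psi \<phi> V a (x (Suc k)) \<le> Psi \<phi> V a (\<lambda>v. (1-e) * x k v + e * F l v))"
    then obtain l where "\<forall>e\<in>{0..1}. Psi \<phi> V a (x (Suc k)) \<le> Psi \<phi> V a (\<lambda>v. (1-e) * x k v + e * F l v)"
      by blast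
    from this[rule_format, of 0] show ?thesis unfolding h_def by simp
  qed
  have dec: "decseq h" by (rule decseq_SucI) (rule mono)
  have small: "\<exists>N. h N < \<eta>" if eta: "0 < \<eta>" for \<eta>
  proof (rule ccontr)
    assume "\<not> (\<exists>N. h N < \<eta>)"
    then have big: "\<And>k. \<eta> \<le> h k" by (simp add: not_less)
    have half: "0 < \<eta>/2" using eta by simp
    obtain \<delta> where d: "\<delta> > 0" and dd: "\<forall>x s e. (\<forall>v\<in>V. x v \<in> {0..1} \<and> s v \<in> {0..1}) \<longrightarrow> 0 \<le> e \<longrightarrow> e < \<delta> \<longrightarrow> e \<le> 1 \<longrightarrow>
       Psi \<phi> V a (\<lambda>v. (1-e) * x v + e * s v) \<le> Psi \<phi> V a x + e * Dirv D2 V a x s + e * (\<eta>/2)"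
      using Psi_unif[where a=a, OF D D2c cv V apos half] by blast
    define e where "e = min 1 (\<delta>/2)"
    have e: "0 < e" "e < \<delta>" "e \<le> 1" unfolding e_def using d by auto
    have desc: "h (Suc k) \<le> h k - e * (\<eta>/2)" for k
      using step[of k]
    proof
      assume "(\<forall>l\<in>{0..ths}. 0 \<le> Dirv D2 V a (x k) (F l)) \<and> x (Suc k) = x k"
      then have "h k = 0" using caseA by blast
      then show ?thesis using big[of k] eta by simp
    next
      assume "\<exists>l\<in>{0..ths}. (\<forall>l'\<in>{0..ths}. Dirv D2 V a (x k) (F l) \<le> Dirv D2 V a (x k) (F l')) \<and>
          (\<forall>e\<in>{0..1}. Psi \<phi> V a (x (Suc k)) \<le> Psi \<phi> V a (\<lambda>v. (1-e) * x k v + e * F l v))"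
      then obtain l where l: "l \<in> {0..ths}" and lm: "\<forall>l'\<in>{0..ths}. Dirv D2 V a (x k) (F l) \<le> Dirv D2 V a (x k) (F l')"
        and le: "\<forall>e\<in>{0..1}. Psi \<phi> V a (x (Suc k)) \<le> Psi \<phi> V a (\<lambda>v. (1-e) * x k v + e * F l v)"
        by blast
      have dirb: "Dirv D2 V a (x k) (F l) \<le> - h k" using sdir[of "Dirv D2 V a (x k) (F l)" k] lm
        unfolding h_def by simp
      have "Psi \<phi> V a (x (Suc k)) \<le> Psi \<phi> V a (\<lambda>v. (1-e) * x k v + e * F l v)" using le e by auto
      also have "\<dots> \<le> Psi \<phi> V a (x k) + e * Dirv D2 V a (x k) (F l) + e * (\<eta>/2)"
        using dd xk F[OF l] e by auto
      finally have "h (Suc k) \<le> h k + e * Dirv D2 V a (x k) (F l) + e * (\<eta>/2)" unfolding h_def by simp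
      also have "\<dots> \<le> h k + e * (- h k) + e * (\<eta>/2)" using mult_left_mono[OF dirb, of e] e by simp
      also have "\<dots> \<le> h k + e * (- \<eta>) + e * (\<eta>/2)"
      proof -
        have "e * \<eta> \<le> e * h k" using big[of k] e by (intro mult_left_mono) auto
        then show ?thesis by linarith
      qed
      finally show ?thesis by (simp add: algebra_simps)
    qed
    have lin: "h k \<le> h 0 - real k * (e * (\<eta>/2))" for k
    proof (induction k)
      case (Suc k)
      have "real (Suc k) * (e * (\<eta>/2)) = real k * (e * (\<eta>/2)) + e * (\<eta>/2)" by (simp add: algebra_simps)
      then show ?case using desc[of k] Suc by linarith
    qed simp
    have pos: "0 < e * (\<eta>/2)" using e eta by simp
    obtain k :: nat where k: "h 0 / (e * (\<eta>/2)) < real k" using reals_Archimedean2 by blast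
    then have "h 0 < real k * (e * (\<eta>/2))" using pos by (simp add: divide_less_eq)
    then have "h k < 0" using lin[of k] by simp
    then show False using h0[of k] by simp
  qed
  show ?thesis
  proof (rule LIMSEQ_I)
    fix r :: real assume r: "0 < r"
    obtain N where N: "h N < r" using small[OF r] by blast
    show "\<exists>no. \<forall>k\<ge>no. norm (Psi \<phi> V a (x k) - Pstar) < r"
    proof (intro exI allI impI)
      fix k assume "N \<le> k"
      then have "h k \<le> h N" using dec by (simp add: decseq_def)
      then show "norm (Psi \<phi> V a (x k) - Pstar) < r" using N h0[of k] unfolding h_def by simp
    qed
  qed
qed



definition muv :: "(nat \<Rightarrow> real \<Rightarrow> real) \<Rightarrow> real \<Rightarrow> real measure \<Rightarrow> nat \<Rightarrow> real" where
  "muv f ths M v = (LINT \<theta>:{0..ths}|M. f v \<theta>)"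

lemma Phi_Psi: "Phi \<phi> f ths n X M = Psi \<phi> (X ` {..<n}) (pmf (empirical n X)) (muv f ths M)"
  unfolding Phi_def Psi_def muv_def ..

lemma muv_pmf:
  assumes S: "finite S" "set_pmf G \<subseteq> S" "S \<subseteq> {0..ths}"
  shows "muv f ths (measure_pmf G) v = (\<Sum>t\<in>S. pmf G t * f v t)"
proof -
  have "muv f ths (measure_pmf G) v = (\<integral>t. indicator {0..ths} t *\<^sub>R f v t \<partial>measure_pmf G)"
    unfolding muv_def set_lebesgue_integral_def ..
  also have "\<dots> = (\<Sum>t\<in>S. (indicator {0..ths} t *\<^sub>R f v t) * pmf G t)"
    by (rule integral_measure_pmf_real) (use S in auto)
  also have "\<dots> = (\<Sum>t\<in>S. pmf G t * f v t)"
    by (rule sum.cong) (use S in \<open>auto simp: indicator_def\<close>)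
  finally show ?thesis .
qed

lemma simplex_comb_props:
  assumes G: "finite (set_pmf G)" "set_pmf G \<subseteq> {0..ths}"
  and L: "finite L" "L \<subseteq> {0..ths}"
  and w: "simplex_weights L e0 e"
  shows "finite (set_pmf (simplex_comb G e0 L e)) \<and> set_pmf (simplex_comb G e0 L e) \<subseteq> {0..ths}
     \<and> (\<forall>v. muv f ths (measure_pmf (simplex_comb G e0 L e)) v = e0 * muv f ths (measure_pmf G) v + (\<Sum>l\<in>L. e l * f v l))"
proof -
  define p where "p t = e0 * pmf G t + (\<Sum>l\<in>L. e l * indicator {l} t)" for t
  define S where "S = set_pmf G \<union> L"
  have S: "finite S" "set_pmf G \<subseteq> S" "S \<subseteq> {0..ths}" "L \<subseteq> S" unfolding S_def using G L by auto
  have w0: "0 \<le> e0" and we: "\<And>l. l \<in> L \<Longrightarrow> 0 \<le> e l" and ws: "e0 + (\<Sum>l\<in>L. e l) = 1"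
    using w unfolding simplex_weights_def by auto
  have pnn: "0 \<le> p t" for t unfolding p_def using w0 we by (auto intro!: sum_nonneg add_nonneg_nonneg)
  have pz: "p t = 0" if "t \<notin> S" for t
  proof -
    have "pmf G t = 0" using that S by (auto simp: set_pmf_eq)
    moreover have "(\<Sum>l\<in>L. e l * indicator {l} t) = 0" using that S by (intro sum.neutral) (auto simp: indicator_def)
    ultimately show ?thesis unfolding p_def by simp
  qed
  have ind: "(\<Sum>t\<in>S. indicator {l} t * c t) = c l" if "l \<in> S" for l and c :: "real \<Rightarrow> real"
  proof -
    have "(\<Sum>t\<in>S. indicator {l} t * c t) = (\<Sum>t\<in>S. if t = l then c l else 0)"
      by (rule sum.cong) (auto simp: indicator_def)
    also have "\<dots> = c l" using that S by (simp add: sum.delta')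
    finally show ?thesis .
  qed
  have sum_pc: "(\<Sum>t\<in>S. p t * c t) = e0 * (\<Sum>t\<in>S. pmf G t * c t) + (\<Sum>l\<in>L. e l * c l)" for c :: "real \<Rightarrow> real"
  proof -
    have "(\<Sum>t\<in>S. p t * c t) = e0 * (\<Sum>t\<in>S. pmf G t * c t) + (\<Sum>t\<in>S. \<Sum>l\<in>L. e l * (indicator {l} t * c t))"
      unfolding p_def by (simp add: algebra_simps sum.distrib sum_distrib_left sum_distrib_right)
    also have "(\<Sum>t\<in>S. \<Sum>l\<in>L. e l * (indicator {l} t * c t)) = (\<Sum>l\<in>L. e l * (\<Sum>t\<in>S. indicator {l} t * c t))"
      by (subst sum.swap) (simp add: sum_distrib_left)
    also have "\<dots> = (\<Sum>l\<in>L. e l * c l)"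
    proof (rule sum.cong)
      fix l assume "l \<in> L"
      then have "l \<in> S" using S by auto
      then show "e l * (\<Sum>t\<in>S. indicator {l} t * c t) = e l * c l" using ind[of l c] by simp
    qed simp
    finally show ?thesis .
  qed
  have sum1: "(\<Sum>t\<in>S. p t) = 1"
    using sum_pc[of "\<lambda>_. 1"] sum_pmf_eq_1[OF S(1,2)] ws by simp
  have nn: "(\<integral>\<^sup>+t. ennreal (p t) \<partial>count_space UNIV) = 1"
  proof -
    have "(\<integral>\<^sup>+t. ennreal (p t) \<partial>count_space UNIV) = (\<Sum>t\<in>S. ennreal (p t))"
      by (rule nn_integral_count_space') (use S pz in auto)
    also have "\<dots> = ennreal (\<Sum>t\<in>S. p t)" using pnn by simp
    finally show ?thesis using sum1 by simp
  qed
  have sc: "simplex_comb G e0 L e = embed_pmf p" unfolding simplex_comb_def p_def ..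
  have pm: "pmf (simplex_comb G e0 L e) t = p t" for t
    unfolding sc by (rule pmf_embed_pmf) (use pnn nn in auto)
  have set: "set_pmf (simplex_comb G e0 L e) \<subseteq> S"
    using pz by (auto simp: set_pmf_eq pm)
  have "muv f ths (measure_pmf (simplex_comb G e0 L e)) v = e0 * muv f ths (measure_pmf G) v + (\<Sum>l\<in>L. e l * f v l)" for v
  proof -
    have "muv f ths (measure_pmf (simplex_comb G e0 L e)) v = (\<Sum>t\<in>S. p t * f v t)"
      using muv_pmf[OF S(1) set S(3)] by (simp add: pm)
    also have "\<dots> = e0 * (\<Sum>t\<in>S. pmf G t * f v t) + (\<Sum>l\<in>L. e l * f v l)" by (rule sum_pc)
    also have "(\<Sum>t\<in>S. pmf G t * f v t) = muv f ths (measure_pmf G) v"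
      using muv_pmf[OF S(1,2,3)] by simp
    finally show ?thesis .
  qed
  then show ?thesis using set S finite_subset by blast
qed


lemma muv_nonneg:
  assumes G: "finite (set_pmf G)" "set_pmf G \<subseteq> {0..ths}"
  and fnn: "\<And>v t. t \<in> {0..ths} \<Longrightarrow> 0 \<le> f v t"
  shows "0 \<le> muv f ths (measure_pmf G) v"
  using G fnn by (subst muv_pmf[OF G(1) order_refl G(2)]) (auto intro!: sum_nonneg)

lemma muv_le1:
  assumes G: "finite (set_pmf G)" "set_pmf G \<subseteq> {0..ths}"
  and f1: "\<And>v t. t \<in> {0..ths} \<Longrightarrow> f v t \<le> 1"
  shows "muv f ths (measure_pmf G) v \<le> 1"
proof -
  have "muv f ths (measure_pmf G) v = (\<Sum>t\<in>set_pmf G. pmf G t * f v t)"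
    by (rule muv_pmf[OF G(1) order_refl G(2)])
  also have "\<dots> \<le> (\<Sum>t\<in>set_pmf G. pmf G t)"
    using G f1 by (intro sum_mono) (auto intro!: mult_left_le pmf_nonneg)
  also have "\<dots> = 1" using sum_pmf_eq_1[OF G(1) order_refl] .
  finally show ?thesis .
qed

lemma vmix_props:
  assumes G: "finite (set_pmf G)" "set_pmf G \<subseteq> {0..ths}"
  and l: "l \<in> {0..ths}" and e: "e \<in> {0..1}"
  shows "finite (set_pmf (vmix e l G)) \<and> set_pmf (vmix e l G) \<subseteq> {0..ths}
     \<and> (\<forall>v. muv f ths (measure_pmf (vmix e l G)) v = (1-e) * muv f ths (measure_pmf G) v + e * f v l)"
proof -
  have w: "simplex_weights {l} (1-e) (\<lambda>_. e)" using e unfolding simplex_weights_def by auto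
  show ?thesis unfolding vmix_def
    using simplex_comb_props[OF G _ _ w, of f] l by auto
qed

lemma Phi_dir_eq:
  assumes D: "\<forall>z\<in>Quad. ((\<lambda>u. \<phi> (fst u) (snd u)) has_derivative (\<lambda>h. D1 z * fst h + D2 z * snd h)) (at z within Quad)"
  and G: "finite (set_pmf G)" "set_pmf G \<subseteq> {0..ths}"
  and l: "l \<in> {0..ths}"
  and fnn: "\<And>v t. t \<in> {0..ths} \<Longrightarrow> 0 \<le> f v t"
  shows "Phi_dir \<phi> f ths n X G l = Dirv D2 (X ` {..<n}) (pmf (empirical n X)) (muv f ths (measure_pmf G)) (\<lambda>v. f v l)"
proof -
  let ?V = "X ` {..<n}" and ?a = "pmf (empirical n X)" and ?x = "muv f ths (measure_pmf G)"
  have lim: "((\<lambda>e. (Psi \<phi> ?V ?a (\<lambda>v. (1-e) * ?x v + e * f v l) - Psi \<phi> ?V ?a ?x) / e) \<longlongrightarrow> Dirv D2 ?V ?a ?x (\<lambda>v. f v l)) (at_right 0)"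
    by (rule Psi_dq_tendsto[OF D]) (use muv_nonneg[OF G fnn] fnn l in auto)
  have ev: "\<forall>\<^sub>F e in at_right 0. (Phi \<phi> f ths n X (measure_pmf (vmix e l G)) - Phi \<phi> f ths n X (measure_pmf G)) / e
       = (Psi \<phi> ?V ?a (\<lambda>v. (1-e) * ?x v + e * f v l) - Psi \<phi> ?V ?a ?x) / e"
  proof (rule eventually_at_rightI[of 0 1])
    fix e :: real assume "e \<in> {0<..<1}"
    then have "e \<in> {0..1}" by auto
    from vmix_props[OF G l this, of f] have "muv f ths (measure_pmf (vmix e l G)) = (\<lambda>v. (1-e) * ?x v + e * f v l)"
      by auto
    then show "(Phi \<phi> f ths n X (measure_pmf (vmix e l G)) - Phi \<phi> f ths n X (measure_pmf G)) / e
       = (Psi \<phi> ?V ?a (\<lambda>v. (1-e) * ?x v + e * f v l) - Psi \<phi> ?V ?a ?x) / e"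
      by (simp add: Phi_Psi)
  qed simp
  have "((\<lambda>e. (Phi \<phi> f ths n X (measure_pmf (vmix e l G)) - Phi \<phi> f ths n X (measure_pmf G)) / e) \<longlongrightarrow> Dirv D2 ?V ?a ?x (\<lambda>v. f v l)) (at_right 0)"
    using tendsto_cong[OF ev] lim by simp
  then show ?thesis unfolding Phi_dir_def by (intro tendsto_Lim) simp_all
qed


definition fwstep :: "(real \<Rightarrow> real \<Rightarrow> real) \<Rightarrow> (real \<times> real \<Rightarrow> real) \<Rightarrow> (nat \<Rightarrow> real \<Rightarrow> real) \<Rightarrow> real \<Rightarrow> nat \<Rightarrow> (nat \<Rightarrow> nat)
   \<Rightarrow> (nat \<Rightarrow> real) \<Rightarrow> (nat \<Rightarrow> real) \<Rightarrow> bool" where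
  "fwstep \<phi> D2 f ths n X x x' \<longleftrightarrow>
    ((\<forall>l\<in>{0..ths}. 0 \<le> Dirv D2 (X ` {..<n}) (pmf (empirical n X)) x (\<lambda>v. f v l)) \<and> x' = x) \<or>
    (\<exists>l\<in>{0..ths}. (\<forall>l'\<in>{0..ths}. Dirv D2 (X ` {..<n}) (pmf (empirical n X)) x (\<lambda>v. f v l)
                                 \<le> Dirv D2 (X ` {..<n}) (pmf (empirical n X)) x (\<lambda>v. f v l')) \<and>
          (\<forall>e\<in>{0..1}. Psi \<phi> (X ` {..<n}) (pmf (empirical n X)) x'
                \<le> Psi \<phi> (X ` {..<n}) (pmf (empirical n X)) (\<lambda>v. (1-e) * x v + e * f v l)))"

lemma vdm_step_fw:
  assumes D: "\<forall>z\<in>Quad. ((\<lambda>u. \<phi> (fst u) (snd u)) has_derivative (\<lambda>h. D1 z * fst h + D2 z * snd h)) (at z within Quad)"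
  and G: "finite (set_pmf G)" "set_pmf G \<subseteq> {0..ths}"
  and fnn: "\<And>v t. t \<in> {0..ths} \<Longrightarrow> 0 \<le> f v t"
  and st: "vdm_step \<phi> f ths n X G G'"
  shows "finite (set_pmf G') \<and> set_pmf G' \<subseteq> {0..ths} \<and>
     fwstep \<phi> D2 f ths n X (muv f ths (measure_pmf G)) (muv f ths (measure_pmf G'))"
proof (cases "\<exists>l\<in>{0..ths}. Phi_dir \<phi> f ths n X G l < 0")
  case True
  have ex: "\<exists>l\<in>{0..ths}. (\<forall>l'\<in>{0..ths}. Phi_dir \<phi> f ths n X G l \<le> Phi_dir \<phi> f ths n X G l') \<and>
           (\<exists>\<epsilon>\<in>{0..1}. (\<forall>\<epsilon>'\<in>{0..1}. Phi \<phi> f ths n X (measure_pmf (vmix \<epsilon> l G))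
                                      \<le> Phi \<phi> f ths n X (measure_pmf (vmix \<epsilon>' l G))) \<and>
                        G' = vmix \<epsilon> l G)"
    using st True unfolding vdm_step_def by simp
  then obtain l \<epsilon> where l: "l \<in> {0..ths}" and lm: "\<forall>l'\<in>{0..ths}. Phi_dir \<phi> f ths n X G l \<le> Phi_dir \<phi> f ths n X G l'"
    and e: "\<epsilon> \<in> {0..1}" and opt: "\<forall>\<epsilon>'\<in>{0..1}. Phi \<phi> f ths n X (measure_pmf (vmix \<epsilon> l G))
                                      \<le> Phi \<phi> f ths n X (measure_pmf (vmix \<epsilon>' l G))"
    and G': "G' = vmix \<epsilon> l G"
    by blast
  have good: "finite (set_pmf G') \<and> set_pmf G' \<subseteq> {0..ths}" using vmix_props[OF G l e] G' by blast
  have "fwstep \<phi> D2 f ths n X (muv f ths (measure_pmf G)) (muv f ths (measure_pmf G'))"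
    unfolding fwstep_def
  proof (intro disjI2 bexI[OF _ l] conjI ballI)
    fix l' assume l': "l' \<in> {0..ths}"
    show "Dirv D2 (X ` {..<n}) (pmf (empirical n X)) (muv f ths (measure_pmf G)) (\<lambda>v. f v l)
        \<le> Dirv D2 (X ` {..<n}) (pmf (empirical n X)) (muv f ths (measure_pmf G)) (\<lambda>v. f v l')"
    proof -
      have "Phi_dir \<phi> f ths n X G l \<le> Phi_dir \<phi> f ths n X G l'" using lm l' by blast
      then show ?thesis using Phi_dir_eq[where f=f and n=n and X=X, OF D G l fnn] Phi_dir_eq[where f=f and n=n and X=X, OF D G l' fnn] by linarith
    qed
  next
    fix e' :: real assume e': "e' \<in> {0..1}"
    have "muv f ths (measure_pmf (vmix e' l G)) = (\<lambda>v. (1-e') * muv f ths (measure_pmf G) v + e' * f v l)"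
      using vmix_props[OF G l e', of f] by auto
    moreover have "Phi \<phi> f ths n X (measure_pmf G') \<le> Phi \<phi> f ths n X (measure_pmf (vmix e' l G))"
      using opt e' G' by blast
    ultimately show "Psi \<phi> (X ` {..<n}) (pmf (empirical n X)) (muv f ths (measure_pmf G'))
        \<le> Psi \<phi> (X ` {..<n}) (pmf (empirical n X)) (\<lambda>v. (1-e') * muv f ths (measure_pmf G) v + e' * f v l)"
      by (simp add: Phi_Psi)
  qed
  then show ?thesis using good by blast
next
  case False
  then have G': "G' = G" using st unfolding vdm_step_def by auto
  have "\<forall>l\<in>{0..ths}. 0 \<le> Dirv D2 (X ` {..<n}) (pmf (empirical n X)) (muv f ths (measure_pmf G)) (\<lambda>v. f v l)"
    using False Phi_dir_eq[where f=f and n=n and X=X, OF D G _ fnn] by (simp add: not_less)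
  then show ?thesis using G G' unfolding fwstep_def by auto
qed

lemma isdm_step_fw:
  assumes D: "\<forall>z\<in>Quad. ((\<lambda>u. \<phi> (fst u) (snd u)) has_derivative (\<lambda>h. D1 z * fst h + D2 z * snd h)) (at z within Quad)"
  and G: "finite (set_pmf G)" "set_pmf G \<subseteq> {0..ths}"
  and fnn: "\<And>v t. t \<in> {0..ths} \<Longrightarrow> 0 \<le> f v t"
  and st: "isdm_step \<phi> f ths n X G G'"
  shows "finite (set_pmf G') \<and> set_pmf G' \<subseteq> {0..ths} \<and>
     fwstep \<phi> D2 f ths n X (muv f ths (measure_pmf G)) (muv f ths (measure_pmf G'))"
proof (cases "\<exists>l\<in>{0..ths}. Phi_dir \<phi> f ths n X G l < 0")
  case True
  have ex: "\<exists>L. finite L \<and> L \<noteq> {} \<and>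
           (\<forall>l\<in>L. local_min_on {0..ths} (Phi_dir \<phi> f ths n X G) l) \<and>
           (\<exists>l\<in>L. \<forall>l'\<in>{0..ths}. Phi_dir \<phi> f ths n X G l \<le> Phi_dir \<phi> f ths n X G l') \<and>
           (\<exists>e0 e. simplex_weights L e0 e \<and>
              (\<forall>e0' e'. simplex_weights L e0' e' \<longrightarrow>
                 Phi \<phi> f ths n X (measure_pmf (simplex_comb G e0 L e))
                   \<le> Phi \<phi> f ths n X (measure_pmf (simplex_comb G e0' L e'))) \<and>
              G' = simplex_comb G e0 L e)"
    using st True unfolding isdm_step_def by simp
  then obtain L l e0 e where L: "finite L" and Lm: "\<forall>l\<in>L. local_min_on {0..ths} (Phi_dir \<phi> f ths n X G) l"
    and lL: "l \<in> L" and lm: "\<forall>l'\<in>{0..ths}. Phi_dir \<phi> f ths n X G l \<le> Phi_dir \<phi> f ths n X G l'"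
    and w: "simplex_weights L e0 e"
    and opt: "\<forall>e0' e'. simplex_weights L e0' e' \<longrightarrow>
                 Phi \<phi> f ths n X (measure_pmf (simplex_comb G e0 L e))
                   \<le> Phi \<phi> f ths n X (measure_pmf (simplex_comb G e0' L e'))"
    and G': "G' = simplex_comb G e0 L e"
    by blast
  have Lsub: "L \<subseteq> {0..ths}" using Lm unfolding local_min_on_def by auto
  have l: "l \<in> {0..ths}" using lL Lsub by auto
  have good: "finite (set_pmf G') \<and> set_pmf G' \<subseteq> {0..ths}" using simplex_comb_props[OF G L Lsub w] G' by blast
  have "fwstep \<phi> D2 f ths n X (muv f ths (measure_pmf G)) (muv f ths (measure_pmf G'))"
    unfolding fwstep_def
  proof (intro disjI2 bexI[OF _ l] conjI ballI)
    fix l' assume l': "l' \<in> {0..ths}"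
    show "Dirv D2 (X ` {..<n}) (pmf (empirical n X)) (muv f ths (measure_pmf G)) (\<lambda>v. f v l)
        \<le> Dirv D2 (X ` {..<n}) (pmf (empirical n X)) (muv f ths (measure_pmf G)) (\<lambda>v. f v l')"
    proof -
      have "Phi_dir \<phi> f ths n X G l \<le> Phi_dir \<phi> f ths n X G l'" using lm l' by blast
      then show ?thesis using Phi_dir_eq[where f=f and n=n and X=X, OF D G l fnn] Phi_dir_eq[where f=f and n=n and X=X, OF D G l' fnn] by linarith
    qed
  next
    fix e' :: real assume e': "e' \<in> {0..1}"
    define ee where "ee m = (if m = l then e' else 0)" for m :: real
    have sE: "(\<Sum>m\<in>L. ee m * c m) = e' * c l" for c :: "real \<Rightarrow> real"
    proof -
      have "(\<Sum>m\<in>L. ee m * c m) = (\<Sum>m\<in>L. if m = l then e' * c l else 0)"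
        by (rule sum.cong) (auto simp: ee_def)
      also have "\<dots> = e' * c l" using L lL by (simp add: sum.delta')
      finally show ?thesis .
    qed
    have w': "simplex_weights L (1-e') ee"
      using e' sE[of "\<lambda>_. 1"] unfolding simplex_weights_def ee_def by auto
    have "muv f ths (measure_pmf (simplex_comb G (1-e') L ee)) = (\<lambda>v. (1-e') * muv f ths (measure_pmf G) v + e' * f v l)"
      using simplex_comb_props[OF G L Lsub w', of f] sE by auto
    moreover have "Phi \<phi> f ths n X (measure_pmf G') \<le> Phi \<phi> f ths n X (measure_pmf (simplex_comb G (1-e') L ee))"
      using opt w' G' by blast
    ultimately show "Psi \<phi> (X ` {..<n}) (pmf (empirical n X)) (muv f ths (measure_pmf G'))
        \<le> Psi \<phi> (X ` {..<n}) (pmf (empirical n X)) (\<lambda>v. (1-e') * muv f ths (measure_pmf G) v + e' * f v l)"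
      by (simp add: Phi_Psi)
  qed
  then show ?thesis using good by blast
next
  case False
  then have G': "G' = G" using st unfolding isdm_step_def by auto
  have "\<forall>l\<in>{0..ths}. 0 \<le> Dirv D2 (X ` {..<n}) (pmf (empirical n X)) (muv f ths (measure_pmf G)) (\<lambda>v. f v l)"
    using False Phi_dir_eq[where f=f and n=n and X=X, OF D G _ fnn] by (simp add: not_less)
  then show ?thesis using G G' unfolding fwstep_def by auto
qed



lemma f_le1:
  fixes f :: "nat \<Rightarrow> real \<Rightarrow> real"
  assumes "\<forall>x. 0 \<le> f x t" "(\<lambda>x. f x t) sums 1"
  shows "f v t \<le> 1"
proof -
  have "sum (\<lambda>x. f x t) {v} \<le> suminf (\<lambda>x. f x t)"
    using sum_le_suminf[of "\<lambda>x. f x t" "{v}"] assms by (auto simp: sums_iff)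
  then show ?thesis using assms by (simp add: sums_iff)
qed

lemma probs_onD:
  assumes "Q \<in> probs_on ths"
  shows "prob_space Q" "sets Q = sets borel" "AE t in Q. t \<in> {0..ths}" "real_distribution Q"
    "emeasure Q {0..ths} = 1"
proof -
  show p: "prob_space Q" and s: "sets Q = sets borel" and e: "emeasure Q {0..ths} = 1"
    using assms unfolding probs_on_def by auto
  interpret prob_space Q by (rule p)
  have "prob {0..ths} = 1" using e by (simp add: emeasure_eq_measure)
  then show "AE t in Q. t \<in> {0..ths}" using s by (subst AE_in_set_eq_1) auto
  show "real_distribution Q" unfolding real_distribution_def real_distribution_axioms_def using p s by auto
qed

lemma ind_meas:
  assumes "continuous_on {0..ths} (g :: real \<Rightarrow> real)" "sets Q = sets borel"
  shows "(\<lambda>t. indicator {0..ths} t *\<^sub>R g t) \<in> borel_measurable Q"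
proof -
  have "(\<lambda>t. indicator {0..ths} t *\<^sub>R g t) \<in> borel_measurable borel"
    by (rule borel_measurable_continuous_on_indicator) (use assms in auto)
  then show ?thesis unfolding measurable_cong_sets[OF assms(2) refl] .
qed

definition fcl :: "(nat \<Rightarrow> real \<Rightarrow> real) \<Rightarrow> real \<Rightarrow> nat \<Rightarrow> real \<Rightarrow> real" where
  "fcl f ths v t = f v (max 0 (min ths t))"

lemma fcl_cont:
  fixes f :: "nat \<Rightarrow> real \<Rightarrow> real"
  assumes "continuous_on {0..ths} (f v)" "0 \<le> ths"
  shows "continuous_on UNIV (fcl f ths v)"
  unfolding fcl_def
  by (rule continuous_on_compose2[OF assms(1)]) (use assms(2) in \<open>auto intro!: continuous_intros\<close>)

lemma fcl_meas:
  fixes f :: "nat \<Rightarrow> real \<Rightarrow> real"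
  assumes "continuous_on {0..ths} (f v)" "0 \<le> ths" "sets Q = sets borel"
  shows "fcl f ths v \<in> borel_measurable Q"
proof -
  have "fcl f ths v \<in> borel_measurable borel"
    using fcl_cont[where f=f and v=v, OF assms(1,2)] by (rule borel_measurable_continuous_onI)
  then show ?thesis unfolding measurable_cong_sets[OF assms(3) refl] .
qed

lemma muv_fcl:
  assumes Q: "Q \<in> probs_on ths" and fc: "continuous_on {0..ths} (f v)" and ths: "0 \<le> ths"
  shows "muv f ths Q v = integral\<^sup>L Q (fcl f ths v)"
proof -
  have "muv f ths Q v = integral\<^sup>L Q (\<lambda>t. indicator {0..ths} t *\<^sub>R f v t)"
    unfolding muv_def set_lebesgue_integral_def ..
  also have "\<dots> = integral\<^sup>L Q (fcl f ths v)"
    using probs_onD(3)[OF Q] ind_meas[where g="f v", OF fc probs_onD(2)[OF Q]] fcl_meas[where f=f and v=v, OF fc ths probs_onD(2)[OF Q]]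
    by (intro integral_cong_AE) (auto simp: fcl_def)
  finally show ?thesis .
qed

lemma mixture_pmf_pmf:
  assumes Q: "Q \<in> probs_on ths"
  and fnn: "\<forall>v t. t \<in> {0..ths} \<longrightarrow> 0 \<le> f v t"
  and fs: "\<forall>t\<in>{0..ths}. (\<lambda>x. f x t) sums 1"
  and fc: "\<forall>v. continuous_on {0..ths} (f v)"
  shows "pmf (mixture_pmf f ths Q) v = muv f ths Q v"
proof -
  interpret prob_space Q using probs_onD[OF Q] by auto
  have sQ: "sets Q = sets borel" using probs_onD[OF Q] by auto
  have f1: "f x t \<le> 1" if "t \<in> {0..ths}" for x t using f_le1[of f t x] fnn fs that by auto
  have meas: "(\<lambda>t. indicator {0..ths} t *\<^sub>R f x t) \<in> borel_measurable Q" for x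
    using ind_meas[OF _ sQ] fc by auto
  have intg: "integrable Q (\<lambda>t. indicator {0..ths} t *\<^sub>R f x t)" for x
    by (rule integrable_const_bound[where B=1]) (use meas f1 fnn in \<open>auto simp: indicator_def\<close>)
  have mu: "muv f ths Q x = integral\<^sup>L Q (\<lambda>t. indicator {0..ths} t *\<^sub>R f x t)" for x
    unfolding muv_def set_lebesgue_integral_def ..
  have nn: "0 \<le> muv f ths Q x" for x
    unfolding mu by (rule Bochner_Integration.integral_nonneg) (use fnn in \<open>auto split: split_indicator\<close>)
  have enn: "ennreal (muv f ths Q x) = (\<integral>\<^sup>+t. ennreal (indicator {0..ths} t *\<^sub>R f x t) \<partial>Q)" for x
    unfolding mu using fnn by (intro nn_integral_eq_integral[symmetric] intg) (auto simp: indicator_def)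
  have inner: "(\<Sum>x. ennreal (indicator {0..ths} t *\<^sub>R f x t)) = indicator {0..ths} t" for t
  proof (cases "t \<in> {0..ths}")
    case True
    then have "(\<Sum>x. ennreal (indicator {0..ths} t *\<^sub>R f x t)) = (\<Sum>x. ennreal (f x t))" by simp
    also have "\<dots> = ennreal (\<Sum>x. f x t)"
      using True fnn fs by (intro suminf_ennreal2) (auto simp: sums_iff)
    also have "\<dots> = 1" using True fs by (simp add: sums_iff)
    finally show ?thesis using True by simp
  qed simp
  have tot: "(\<integral>\<^sup>+x. ennreal (muv f ths Q x) \<partial>count_space UNIV) = 1"
  proof -
    have "(\<integral>\<^sup>+x. ennreal (muv f ths Q x) \<partial>count_space UNIV) = (\<Sum>x. ennreal (muv f ths Q x))"
      by (rule nn_integral_count_space_nat)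
    also have "\<dots> = (\<Sum>x. \<integral>\<^sup>+t. ennreal (indicator {0..ths} t *\<^sub>R f x t) \<partial>Q)" by (simp only: enn)
    also have "\<dots> = (\<integral>\<^sup>+t. (\<Sum>x. ennreal (indicator {0..ths} t *\<^sub>R f x t)) \<partial>Q)"
      by (rule nn_integral_suminf[symmetric]) (use meas in auto)
    also have "\<dots> = (\<integral>\<^sup>+t. indicator {0..ths} t \<partial>Q)" by (simp only: inner)
    also have "\<dots> = emeasure Q {0..ths}" using sQ by simp
    also have "\<dots> = 1" using probs_onD[OF Q] by simp
    finally show ?thesis .
  qed
  show ?thesis unfolding mixture_pmf_def
    using pmf_embed_pmf[of "muv f ths Q", OF nn tot] unfolding muv_def by simp
qed


lemma empirical_props:
  assumes n: "0 < n"
  shows "set_pmf (empirical n X) = X ` {..<n}" "\<And>v. v \<in> X ` {..<n} \<Longrightarrow> 0 < pmf (empirical n X) v"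
    "\<And>v. v \<notin> X ` {..<n} \<Longrightarrow> pmf (empirical n X) v = 0"
proof -
  show s: "set_pmf (empirical n X) = X ` {..<n}"
    unfolding empirical_def using n by (simp add: set_pmf_of_set lessThan_empty_iff)
  show "\<And>v. v \<in> X ` {..<n} \<Longrightarrow> 0 < pmf (empirical n X) v" using s by (simp add: pmf_positive_iff)
  show "\<And>v. v \<notin> X ` {..<n} \<Longrightarrow> pmf (empirical n X) v = 0" using s by (metis set_pmf_iff)
qed

lemma d_identity:
  assumes dA: "assumptionA d \<phi>" and n: "0 < n"
  and fnn: "\<forall>v t. t \<in> {0..ths} \<longrightarrow> 0 \<le> f v t"
  and fs: "\<forall>t\<in>{0..ths}. (\<lambda>x. f x t) sums 1"
  and fc: "\<forall>v. continuous_on {0..ths} (f v)"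
  shows "\<exists>c. \<forall>Q\<in>probs_on ths. d (empirical n X) (mixture_pmf f ths Q) = c + Phi \<phi> f ths n X Q"
proof -
  obtain wd where wd: "\<And>p q. d p q = wd p + (\<Sum>x. \<phi> (pmf p x) (pmf q x))" and z: "\<forall>y2\<ge>0. \<phi> 0 y2 = 0"
    using dA unfolding assumptionA_def by blast
  show ?thesis
  proof (intro exI[of _ "wd (empirical n X)"] ballI)
    fix Q assume Q: "Q \<in> probs_on ths"
    have "(\<Sum>x. \<phi> (pmf (empirical n X) x) (pmf (mixture_pmf f ths Q) x))
        = (\<Sum>x\<in>X ` {..<n}. \<phi> (pmf (empirical n X) x) (pmf (mixture_pmf f ths Q) x))"
      by (rule suminf_finite) (use empirical_props(3)[OF n] z in auto)
    also have "\<dots> = Phi \<phi> f ths n X Q"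
      unfolding Phi_def using mixture_pmf_pmf[OF Q fnn fs fc] unfolding muv_def by simp
    finally show "d (empirical n X) (mixture_pmf f ths Q) = wd (empirical n X) + Phi \<phi> f ths n X Q"
      by (simp add: wd)
  qed
qed

lemma distr_probs_on:
  assumes G: "set_pmf G \<subseteq> {0..ths}"
  and fc: "\<forall>v. continuous_on {0..ths} (f v)"
  shows "distr (measure_pmf G) borel id \<in> probs_on ths"
    "muv f ths (distr (measure_pmf G) borel id) = muv f ths (measure_pmf G)"
proof -
  have m: "id \<in> measurable (measure_pmf G) borel" by simp
  show "distr (measure_pmf G) borel id \<in> probs_on ths"
    unfolding probs_on_def
  proof (intro CollectI conjI)
    show "prob_space (distr (measure_pmf G) borel id)"
      by (rule measure_pmf.prob_space_distr[OF m])
    show "sets (distr (measure_pmf G) borel id) = sets borel" by simp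
    have "emeasure (distr (measure_pmf G) borel id) {0..ths} = emeasure (measure_pmf G) {0..ths}"
      by (subst emeasure_distr[OF m]) auto
    also have "\<dots> = 1"
      by (rule measure_pmf.emeasure_eq_1_AE) (use G in \<open>auto intro!: AE_pmfI\<close>)
    finally show "emeasure (distr (measure_pmf G) borel id) {0..ths} = 1" .
  qed
  show "muv f ths (distr (measure_pmf G) borel id) = muv f ths (measure_pmf G)"
  proof
    fix v
    have "(\<lambda>t. indicator {0..ths} t *\<^sub>R f v t) \<in> borel_measurable borel"
      by (rule borel_measurable_continuous_on_indicator) (use fc in auto)
    then show "muv f ths (distr (measure_pmf G) borel id) v = muv f ths (measure_pmf G) v"
      unfolding muv_def set_lebesgue_integral_def by (subst integral_distr[OF m]) auto
  qed
qed

lemma sdir_lemma: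
  assumes D: "\<forall>z\<in>Quad. ((\<lambda>u. \<phi> (fst u) (snd u)) has_derivative (\<lambda>h. D1 z * fst h + D2 z * snd h)) (at z within Quad)"
  and cv: "\<forall>y1>0. strict_convex_on_set {0..} (\<phi> y1)"
  and Q: "Q \<in> probs_on ths" and ths: "0 \<le> ths"
  and fnn: "\<forall>v t. t \<in> {0..ths} \<longrightarrow> 0 \<le> f v t"
  and fc: "\<forall>v. continuous_on {0..ths} (f v)"
  and fs: "\<forall>t\<in>{0..ths}. (\<lambda>x. f x t) sums 1"
  and V: "finite V" and apos: "\<And>v. v \<in> V \<Longrightarrow> 0 < a v"
  and xnn: "\<And>v. v \<in> V \<Longrightarrow> 0 \<le> x v"
  and m: "\<forall>t\<in>{0..ths}. m \<le> Dirv D2 V a x (\<lambda>v. f v t)"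
  shows "m \<le> Psi \<phi> V a (muv f ths Q) - Psi \<phi> V a x"
proof -
  interpret prob_space Q using probs_onD[OF Q] by auto
  have sQ: "sets Q = sets borel" using probs_onD[OF Q] by auto
  have f1: "f v t \<le> 1" if "t \<in> {0..ths}" for v t using f_le1[of f t v] fnn fs that by auto
  have meas: "fcl f ths v \<in> borel_measurable Q" for v using fcl_meas[where f=f and v=v] fc ths sQ by blast
  have intg: "integrable Q (fcl f ths v)" for v
    by (rule integrable_const_bound[where B=1]) (use meas f1 fnn ths in \<open>auto simp: fcl_def\<close>)
  have mu: "muv f ths Q v = integral\<^sup>L Q (fcl f ths v)" for v using muv_fcl[OF Q] fc ths by blast
  have "Dirv D2 V a x (muv f ths Q) = (\<Sum>v\<in>V. D2 (a v, x v) * (integral\<^sup>L Q (fcl f ths v) - x v))"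
    unfolding Dirv_def mu ..
  also have "\<dots> = (\<Sum>v\<in>V. integral\<^sup>L Q (\<lambda>t. D2 (a v, x v) * (fcl f ths v t - x v)))"
    using intg prob_space by (simp add: algebra_simps)
  also have "\<dots> = integral\<^sup>L Q (\<lambda>t. \<Sum>v\<in>V. D2 (a v, x v) * (fcl f ths v t - x v))"
    by (rule Bochner_Integration.integral_sum[where f="\<lambda>v t. D2 (a v, x v) * (fcl f ths v t - x v)", symmetric]) (use intg in auto)
  also have "\<dots> \<ge> m"
  proof (rule integral_ge_const)
    show "integrable Q (\<lambda>t. \<Sum>v\<in>V. D2 (a v, x v) * (fcl f ths v t - x v))" using intg by auto
    show "AE t in Q. m \<le> (\<Sum>v\<in>V. D2 (a v, x v) * (fcl f ths v t - x v))"
      using probs_onD(3)[OF Q]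
    proof eventually_elim
      case (elim t)
      then have "fcl f ths v t = f v t" for v by (auto simp: fcl_def)
      then show ?case using m elim unfolding Dirv_def by simp
    qed
  qed
  finally have "m \<le> Dirv D2 V a x (muv f ths Q)" .
  also have "\<dots> \<le> Psi \<phi> V a (muv f ths Q) - Psi \<phi> V a x"
  proof (rule Psi_tangent[OF D cv])
    fix v assume v: "v \<in> V"
    have "0 \<le> integral\<^sup>L Q (fcl f ths v)"
      by (rule Bochner_Integration.integral_nonneg) (use fnn ths in \<open>auto simp: fcl_def\<close>)
    then show "0 < a v \<and> 0 \<le> x v \<and> 0 \<le> muv f ths Q v" using apos[OF v] xnn[OF v] mu by simp
  qed
  finally show ?thesis .
qed


lemma exists_min:
  assumes D: "\<forall>z\<in>Quad. ((\<lambda>u. \<phi> (fst u) (snd u)) has_derivative (\<lambda>h. D1 z * fst h + D2 z * snd h)) (at z within Quad)"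
  and ths: "0 \<le> ths"
  and fnn: "\<forall>v t. t \<in> {0..ths} \<longrightarrow> 0 \<le> f v t"
  and fc: "\<forall>v. continuous_on {0..ths} (f v)"
  and fs: "\<forall>t\<in>{0..ths}. (\<lambda>x. f x t) sums 1"
  and bdd: "\<forall>Q\<in>probs_on ths. B \<le> Phi \<phi> f ths n X Q"
  shows "\<exists>Q\<in>probs_on ths. \<forall>Q'\<in>probs_on ths. Phi \<phi> f ths n X Q \<le> Phi \<phi> f ths n X Q'"
proof -
  let ?P = "Phi \<phi> f ths n X"
  define I where "I = Inf (?P ` probs_on ths)"
  have f1: "f v t \<le> 1" if "t \<in> {0..ths}" for v t using f_le1[of f t v] fnn fs that by auto
  have ne: "return borel 0 \<in> probs_on ths"
    unfolding probs_on_def using ths by (auto intro!: prob_space_return)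
  have bb: "bdd_below (?P ` probs_on ths)" using bdd by (auto intro!: bdd_belowI)
  have lower: "\<And>Q. Q \<in> probs_on ths \<Longrightarrow> I \<le> ?P Q" unfolding I_def using bb by (auto intro!: cInf_lower)
  have "\<exists>Q\<in>probs_on ths. ?P Q < I + 1 / (real k + 1)" for k
  proof -
    have "Inf (?P ` probs_on ths) < I + 1 / (real k + 1)" unfolding I_def by simp
    then obtain y where "y \<in> ?P ` probs_on ths" "y < I + 1 / (real k + 1)"
      using cInf_lessD[of "?P ` probs_on ths"] ne by blast
    then show ?thesis by blast
  qed
  then obtain Qs where Qs: "\<And>k. Qs k \<in> probs_on ths" and QsI: "\<And>k. ?P (Qs k) < I + 1 / (real k + 1)"
    by metis
  have rd: "\<And>k. real_distribution (Qs k)" using probs_onD(4)[OF Qs] .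
  have tight: "tight Qs"
    unfolding tight_def
  proof (intro conjI allI impI rd)
    fix \<epsilon> :: real assume e: "0 < \<epsilon>"
    have "1 - \<epsilon> < measure (Qs k) {-1<..ths}" for k
    proof -
      interpret prob_space "Qs k" using probs_onD(1)[OF Qs[of k]] .
      have sk: "sets (Qs k) = sets borel" using probs_onD(2)[OF Qs[of k]] .
      have "measure (Qs k) {0..ths} = 1" using probs_onD(5)[OF Qs[of k]] by (simp add: emeasure_eq_measure)
      moreover have "measure (Qs k) {0..ths} \<le> measure (Qs k) {-1<..ths}"
        using sk by (intro finite_measure_mono) auto
      ultimately show "1 - \<epsilon> < measure (Qs k) {-1<..ths}" using e by simp
    qed
    moreover have "-1 < ths" using ths by simp
    ultimately show "\<exists>a b. a < b \<and> (\<forall>k. 1 - \<epsilon> < measure (Qs k) {a<..b})" by blast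
  qed
  obtain r M where r: "strict_mono r" and M: "real_distribution M" and wc: "weak_conv_m (Qs \<circ> id \<circ> r) M"
    using tight_imp_convergent_subsubsequence[OF tight strict_mono_id] by blast
  have rd': "\<And>k. real_distribution ((Qs \<circ> id \<circ> r) k)" using rd by simp
  have conv: "(\<lambda>k. integral\<^sup>L (Qs (r k)) g) \<longlonglongrightarrow> integral\<^sup>L M g"
    if gc: "continuous_on UNIV g" and gb: "\<And>t. norm (g t) \<le> Bg" for g :: "real \<Rightarrow> real" and Bg
    using weak_conv_imp_integral_bdd_continuous_conv[OF rd' M wc, of g Bg] gc gb
    by (simp add: continuous_on_eq_continuous_at)
  interpret M: real_distribution M by (rule M)
  define h where "h t = min 1 (infdist t {0..ths})" for t :: real
  have hc: "continuous_on UNIV h" unfolding h_def by (intro continuous_intros)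
  have h0: "integral\<^sup>L (Qs (r k)) h = 0" for k
  proof (rule integral_eq_zero_AE)
    show "AE t in Qs (r k). h t = 0" using probs_onD(3)[OF Qs] by eventually_elim (simp add: h_def)
  qed
  have "(\<lambda>k. integral\<^sup>L (Qs (r k)) h) \<longlonglongrightarrow> integral\<^sup>L M h"
    by (rule conv[OF hc, of 1]) (simp add: h_def infdist_nonneg)
  then have hM: "integral\<^sup>L M h = 0" using h0 by (simp add: LIMSEQ_const_iff)
  have hmeas: "h \<in> borel_measurable M"
    using borel_measurable_continuous_onI[OF hc] by (simp add: measurable_cong_sets[OF M.events_eq_borel refl])
  have hint: "integrable M h"
    by (rule M.integrable_const_bound[where B=1]) (use hmeas in \<open>auto simp: h_def infdist_nonneg\<close>)
  have "AE t in M. h t = 0"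
    using hM integral_nonneg_eq_0_iff_AE[OF hint] by (simp add: h_def infdist_nonneg)
  then have aeM: "AE t in M. t \<in> {0..ths}"
  proof eventually_elim
    case (elim t)
    then have "infdist t {0..ths} = 0" unfolding h_def by (auto simp: min_def split: if_splits)
    then show ?case using in_closed_iff_infdist_zero[of "{0..ths}" t] ths by auto
  qed
  have Mp: "M \<in> probs_on ths"
    unfolding probs_on_def using aeM by (auto intro!: M.emeasure_eq_1_AE M.prob_space_axioms)
  have muconv: "(\<lambda>k. muv f ths (Qs (r k)) v) \<longlonglongrightarrow> muv f ths M v" for v
  proof -
    have "(\<lambda>k. integral\<^sup>L (Qs (r k)) (fcl f ths v)) \<longlonglongrightarrow> integral\<^sup>L M (fcl f ths v)"
      by (rule conv[OF fcl_cont, of _ _ _ 1]) (use fc ths fnn f1 in \<open>auto simp: fcl_def\<close>)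
    then show ?thesis using muv_fcl[OF Qs] muv_fcl[OF Mp] fc ths by simp
  qed
  have munn: "0 \<le> muv f ths Q v" if "Q \<in> probs_on ths" for Q v
  proof -
    interpret prob_space Q using probs_onD(1)[OF that] .
    show ?thesis using muv_fcl[OF that] fc ths fnn
      by (simp add: fcl_def)
  qed
  have "(\<lambda>k. ?P (Qs (r k))) \<longlonglongrightarrow> ?P M"
    unfolding Phi_Psi Psi_def
  proof (rule tendsto_sum)
    fix v assume v: "v \<in> X ` {..<n}"
    have c: "continuous_on {0..} (\<phi> (pmf (empirical n X) v))" by (rule cont_phi[OF D]) simp
    show "(\<lambda>k. \<phi> (pmf (empirical n X) v) (muv f ths (Qs (r k)) v)) \<longlonglongrightarrow> \<phi> (pmf (empirical n X) v) (muv f ths M v)"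
      using continuous_on_tendsto_compose[OF c muconv] munn Mp Qs by auto
  qed
  moreover have "(\<lambda>k. ?P (Qs (r k))) \<longlonglongrightarrow> I"
  proof (rule tendsto_sandwich[of "\<lambda>_. I" _ _ "\<lambda>k. I + 1 / (real k + 1)"])
    show "\<forall>\<^sub>F k in sequentially. I \<le> ?P (Qs (r k))" using lower Qs by auto
    show "\<forall>\<^sub>F k in sequentially. ?P (Qs (r k)) \<le> I + 1 / (real k + 1)"
    proof (intro always_eventually allI)
      fix k
      have "k \<le> r k" using seq_suble[OF r] .
      then have "1 / (real (r k) + 1) \<le> 1 / (real k + 1)" by (intro divide_left_mono) auto
      then show "?P (Qs (r k)) \<le> I + 1 / (real k + 1)" using QsI[of "r k"] by simp
    qed
    show "(\<lambda>k. I + 1 / (real k + 1)) \<longlonglongrightarrow> I"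
      using LIMSEQ_inverse_real_of_nat_add[of I] by (simp add: inverse_eq_divide add.commute)
  qed simp
  ultimately have "?P M = I" by (rule LIMSEQ_unique)
  then show ?thesis using Mp lower by auto
qed



lemma fw_from_steps:
  assumes D: "\<forall>z\<in>Quad. ((\<lambda>u. \<phi> (fst u) (snd u)) has_derivative (\<lambda>h. D1 z * fst h + D2 z * snd h)) (at z within Quad)"
  and D2c: "continuous_on Quad D2"
  and cv: "\<forall>y1>0. strict_convex_on_set {0..} (\<phi> y1)"
  and ths: "0 \<le> ths"
  and fnn: "\<forall>v t. t \<in> {0..ths} \<longrightarrow> 0 \<le> f v t"
  and fc: "\<forall>v. continuous_on {0..ths} (f v)"
  and fs: "\<forall>t\<in>{0..ths}. (\<lambda>x. f x t) sums 1"
  and n: "0 < n"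
  and Qh: "Qh \<in> probs_on ths"
  and opt: "\<forall>Q'\<in>probs_on ths. Phi \<phi> f ths n X Qh \<le> Phi \<phi> f ths n X Q'"
  and G0: "finite (set_pmf (G 0)) \<and> set_pmf (G 0) \<subseteq> {0..ths}"
  and st: "\<And>k. finite (set_pmf (G k)) \<Longrightarrow> set_pmf (G k) \<subseteq> {0..ths} \<Longrightarrow>
     finite (set_pmf (G (Suc k))) \<and> set_pmf (G (Suc k)) \<subseteq> {0..ths} \<and>
     fwstep \<phi> D2 f ths n X (muv f ths (measure_pmf (G k))) (muv f ths (measure_pmf (G (Suc k))))"
  shows "(\<lambda>k. Phi \<phi> f ths n X (measure_pmf (G k))) \<longlonglongrightarrow> Phi \<phi> f ths n X Qh"
proof -
  have good: "finite (set_pmf (G k)) \<and> set_pmf (G k) \<subseteq> {0..ths}" for k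
  proof (induction k)
    case 0 then show ?case using G0 .
  next
    case (Suc k) then show ?case using st by blast
  qed
  have f1: "f v t \<le> 1" if "t \<in> {0..ths}" for v t using f_le1[of f t v] fnn fs that by auto
  define x where "x k = muv f ths (measure_pmf (G k))" for k
  define V where "V = X ` {..<n}"
  define a where "a = pmf (empirical n X)"
  have V: "finite V" "V \<noteq> {}" unfolding V_def using n by auto
  have apos: "\<And>v. v \<in> V \<Longrightarrow> 0 < a v" unfolding V_def a_def using empirical_props(2)[OF n] by blast
  have xk: "\<And>k v. v \<in> V \<Longrightarrow> x k v \<in> {0..1}"
    unfolding x_def using good muv_nonneg[of "G _" ths f] muv_le1[of "G _" ths f] fnn f1 by auto
  have F: "\<And>t v. t \<in> {0..ths} \<Longrightarrow> v \<in> V \<Longrightarrow> (\<lambda>t v. f v t) t v \<in> {0..1}"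
    using fnn f1 by auto
  have low: "\<And>k. Phi \<phi> f ths n X Qh \<le> Psi \<phi> V a (x k)"
  proof -
    fix k
    have "Phi \<phi> f ths n X Qh \<le> Phi \<phi> f ths n X (distr (measure_pmf (G k)) borel id)"
      using opt distr_probs_on(1)[of "G k" ths f] good fc by blast
    also have "\<dots> = Psi \<phi> V a (x k)"
      unfolding Phi_Psi V_def a_def x_def using distr_probs_on(2)[of "G k" ths f] good fc by simp
    finally show "Phi \<phi> f ths n X Qh \<le> Psi \<phi> V a (x k)" .
  qed
  have sdir: "\<And>k m. (\<forall>t\<in>{0..ths}. m \<le> Dirv D2 V a (x k) ((\<lambda>t v. f v t) t)) \<Longrightarrow> m \<le> Phi \<phi> f ths n X Qh - Psi \<phi> V a (x k)"
  proof -
    fix k m assume m: "\<forall>t\<in>{0..ths}. m \<le> Dirv D2 V a (x k) ((\<lambda>t v. f v t) t)"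
    have "m \<le> Psi \<phi> V a (muv f ths Qh) - Psi \<phi> V a (x k)"
      by (rule sdir_lemma[OF D cv Qh ths fnn fc fs V(1) apos]) (use xk m in auto)
    then show "m \<le> Phi \<phi> f ths n X Qh - Psi \<phi> V a (x k)" unfolding Phi_Psi V_def a_def .
  qed
  have step: "\<And>k. ((\<forall>l\<in>{0..ths}. 0 \<le> Dirv D2 V a (x k) ((\<lambda>t v. f v t) l)) \<and> x (Suc k) = x k) \<or>
      (\<exists>l\<in>{0..ths}. (\<forall>l'\<in>{0..ths}. Dirv D2 V a (x k) ((\<lambda>t v. f v t) l) \<le> Dirv D2 V a (x k) ((\<lambda>t v. f v t) l')) \<and>
          (\<forall>e\<in>{0..1}. Psi \<phi> V a (x (Suc k)) \<le> Psi \<phi> V a (\<lambda>v. (1-e) * x k v + e * (\<lambda>t v. f v t) l v)))"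
  proof -
    fix k
    have "fwstep \<phi> D2 f ths n X (x k) (x (Suc k))" unfolding x_def using st good by blast
    then show "?thesis k" unfolding fwstep_def V_def a_def by simp
  qed
  have "(\<lambda>k. Psi \<phi> V a (x k)) \<longlonglongrightarrow> Phi \<phi> f ths n X Qh"
    by (rule fw_conv[where F="\<lambda>t v. f v t" and x=x and V=V and a=a and ths=ths and Pstar="Phi \<phi> f ths n X Qh", OF D D2c cv V apos xk F low sdir step])
  then show ?thesis unfolding Phi_Psi V_def a_def x_def .
qed

theorem theorem2:
  fixes g :: "real \<Rightarrow> real" and w :: "nat \<Rightarrow> real" and ths :: real
    and f :: "nat \<Rightarrow> real \<Rightarrow> real"
    and n :: nat and X :: "nat \<Rightarrow> nat"
    and d :: "nat pmf \<Rightarrow> nat pmf \<Rightarrow> real" and \<phi> :: "real \<Rightarrow> real \<Rightarrow> real"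
  assumes f_def: "\<And>x \<theta>. f x \<theta> = g \<theta> * w x * \<theta> ^ x"
    and g_analytic: "analytic_near_zero g"
    and ths_nonneg: "0 \<le> ths"
    and ths_lt: "ereal ths < conv_radius w"
    and f_pmf: "\<And>\<theta>. \<theta> \<in> {0..ths} \<Longrightarrow> (\<forall>x. 0 \<le> f x \<theta>) \<and> (\<lambda>x. f x \<theta>) sums 1"
    and f_cont: "\<And>x. continuous_on {0..ths} (f x)"
    and n_pos: "0 < n"
    and d_dist: "generalized_distance d"
    and d_A: "assumptionA d \<phi>"
  shows "(\<exists>Q\<in>probs_on ths. \<forall>Q'\<in>probs_on ths.
            d (empirical n X) (mixture_pmf f ths Q) \<le> d (empirical n X) (mixture_pmf f ths Q'))
       \<and> (\<forall>Qh\<in>probs_on ths.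
            (\<forall>Q'\<in>probs_on ths.
               d (empirical n X) (mixture_pmf f ths Qh) \<le> d (empirical n X) (mixture_pmf f ths Q')) \<longrightarrow>
            (\<forall>l0 G. l0 \<in> {0<..<ths} \<and> G 0 = return_pmf l0 \<and>
                   (\<forall>k. vdm_step \<phi> f ths n X (G k) (G (Suc k))) \<longrightarrow>
                   (\<lambda>k. Phi \<phi> f ths n X (measure_pmf (G k))) \<longlonglongrightarrow> Phi \<phi> f ths n X Qh) \<and>
            (\<forall>l0 G. l0 \<in> {0<..<ths} \<and> G 0 = return_pmf l0 \<and>
                   (\<forall>k. isdm_step \<phi> f ths n X (G k) (G (Suc k))) \<longrightarrow>
                   (\<lambda>k. Phi \<phi> f ths n X (measure_pmf (G k))) \<longlonglongrightarrow> Phi \<phi> f ths n X Qh))"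
proof -
  obtain D1 D2 where D2c: "continuous_on Quad D2"
    and D: "\<forall>z\<in>Quad. ((\<lambda>u. \<phi> (fst u) (snd u)) has_derivative (\<lambda>h. D1 z * fst h + D2 z * snd h)) (at z within Quad)"
    using d_A unfolding assumptionA_def C1_on_quadrant_def by blast
  have cv: "\<forall>y1>0. strict_convex_on_set {0..} (\<phi> y1)" using d_A unfolding assumptionA_def by blast
  have fnn: "\<forall>v t. t \<in> {0..ths} \<longrightarrow> 0 \<le> f v t" using f_pmf by blast
  have fs: "\<forall>t\<in>{0..ths}. (\<lambda>x. f x t) sums 1" using f_pmf by blast
  have fc: "\<forall>v. continuous_on {0..ths} (f v)" using f_cont by blast
  have fnn': "\<And>v t. t \<in> {0..ths} \<Longrightarrow> 0 \<le> f v t" using fnn by blast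
  obtain c where cid: "\<forall>Q\<in>probs_on ths. d (empirical n X) (mixture_pmf f ths Q) = c + Phi \<phi> f ths n X Q"
    using d_identity[OF d_A n_pos fnn fs fc] by blast
  have bdd: "\<forall>Q\<in>probs_on ths. - c \<le> Phi \<phi> f ths n X Q"
  proof
    fix Q assume Q: "Q \<in> probs_on ths"
    have "0 \<le> d (empirical n X) (mixture_pmf f ths Q)" using d_dist unfolding generalized_distance_def by blast
    then show "- c \<le> Phi \<phi> f ths n X Q" using cid Q by simp
  qed
  obtain Q0 where Q0: "Q0 \<in> probs_on ths" and Q0m: "\<forall>Q'\<in>probs_on ths. Phi \<phi> f ths n X Q0 \<le> Phi \<phi> f ths n X Q'"
    using exists_min[OF D ths_nonneg fnn fc fs bdd] by blast
  have part1: "\<exists>Q\<in>probs_on ths. \<forall>Q'\<in>probs_on ths.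
            d (empirical n X) (mixture_pmf f ths Q) \<le> d (empirical n X) (mixture_pmf f ths Q')"
    using Q0 Q0m cid by (intro bexI[OF _ Q0]) auto
  show ?thesis
  proof (intro conjI part1 ballI impI)
    fix Qh assume Qh: "Qh \<in> probs_on ths"
      and Qhm: "\<forall>Q'\<in>probs_on ths. d (empirical n X) (mixture_pmf f ths Qh) \<le> d (empirical n X) (mixture_pmf f ths Q')"
    have opt: "\<forall>Q'\<in>probs_on ths. Phi \<phi> f ths n X Qh \<le> Phi \<phi> f ths n X Q'"
      using Qhm cid Qh by auto
    have start: "finite (set_pmf (G 0)) \<and> set_pmf (G 0) \<subseteq> {0..ths}"
      if "l0 \<in> {0<..<ths} \<and> G 0 = return_pmf l0" for l0 and G :: "nat \<Rightarrow> real pmf"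
      using that by auto
    show "\<forall>l0 G. l0 \<in> {0<..<ths} \<and> G 0 = return_pmf l0 \<and>
                   (\<forall>k. vdm_step \<phi> f ths n X (G k) (G (Suc k))) \<longrightarrow>
                   (\<lambda>k. Phi \<phi> f ths n X (measure_pmf (G k))) \<longlonglongrightarrow> Phi \<phi> f ths n X Qh"
    proof (intro allI impI)
      fix l0 and G :: "nat \<Rightarrow> real pmf"
      assume a: "l0 \<in> {0<..<ths} \<and> G 0 = return_pmf l0 \<and> (\<forall>k. vdm_step \<phi> f ths n X (G k) (G (Suc k)))"
      show "(\<lambda>k. Phi \<phi> f ths n X (measure_pmf (G k))) \<longlonglongrightarrow> Phi \<phi> f ths n X Qh"
      proof (rule fw_from_steps[OF D D2c cv ths_nonneg fnn fc fs n_pos Qh opt])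
        show "finite (set_pmf (G 0)) \<and> set_pmf (G 0) \<subseteq> {0..ths}" using start a by blast
        fix k assume "finite (set_pmf (G k))" "set_pmf (G k) \<subseteq> {0..ths}"
        then show "finite (set_pmf (G (Suc k))) \<and> set_pmf (G (Suc k)) \<subseteq> {0..ths} \<and>
          fwstep \<phi> D2 f ths n X (muv f ths (measure_pmf (G k))) (muv f ths (measure_pmf (G (Suc k))))"
          using vdm_step_fw[where f=f, OF D _ _ fnn'] a by blast
      qed
    qed
    show "\<forall>l0 G. l0 \<in> {0<..<ths} \<and> G 0 = return_pmf l0 \<and>
                   (\<forall>k. isdm_step \<phi> f ths n X (G k) (G (Suc k))) \<longrightarrow>
                   (\<lambda>k. Phi \<phi> f ths n X (measure_pmf (G k))) \<longlonglongrightarrow> Phi \<phi> f ths n X Qh"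
    proof (intro allI impI)
      fix l0 and G :: "nat \<Rightarrow> real pmf"
      assume a: "l0 \<in> {0<..<ths} \<and> G 0 = return_pmf l0 \<and> (\<forall>k. isdm_step \<phi> f ths n X (G k) (G (Suc k)))"
      show "(\<lambda>k. Phi \<phi> f ths n X (measure_pmf (G k))) \<longlonglongrightarrow> Phi \<phi> f ths n X Qh"
      proof (rule fw_from_steps[OF D D2c cv ths_nonneg fnn fc fs n_pos Qh opt])
        show "finite (set_pmf (G 0)) \<and> set_pmf (G 0) \<subseteq> {0..ths}" using start a by blast
        fix k assume "finite (set_pmf (G k))" "set_pmf (G k) \<subseteq> {0..ths}"
        then show "finite (set_pmf (G (Suc k))) \<and> set_pmf (G (Suc k)) \<subseteq> {0..ths} \<and>
          fwstep \<phi> D2 f ths n X (muv f ths (measure_pmf (G k))) (muv f ths (measure_pmf (G (Suc k))))"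
          using isdm_step_fw[where f=f, OF D _ _ fnn'] a by blast
      qed
    qed
  qed
qed

end
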